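(* Let $\mathfrak g(t)=2+\alpha-(N+\alpha)t^{N-2}+(N-2)t^{N+\alpha}$ and $\mathfrak h(t)=\alpha-(N+\alpha)t^N+Nt^{N+\alpha}$. Then $\mathfrak g(t)>\mathfrak g(1)=0$ and $\mathfrak h(t)>\mathfrak h(1)=0$ for all $t\in[0,1)\cup(1,\infty)$. Moreover, if $V$ satisfies (V3), then for all $t\ge0$ and $x\in\mathbb R^N\setminus\{0\}$, $$(\alpha+Nt^{N+\alpha})V(x)-(N+\alpha)t^NV(tx)+(t^{N+\alpha}-1)\nabla V(x)\cdot x\ \ge\ -\frac{(N-2)^2\theta\,\mathfrak g(t)}{4|x|^2}.$$
   Context: $N\ge3$, $\alpha\in(0,N)$. (V3): $V\in C^1(\mathbb R^N,\mathbb R)$ and there is $\theta\in[0,1)$ such that for every $x\neq0$ the map $t\mapsto \frac{NV(tx)+\nabla V(tx)\cdot(tx)}{t^\alpha}+\frac{(N-2)^3\theta}{4t^{\alpha+2}|x|^2}$ is nonincreasing on $(0,\infty)$. *)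

theory Defs
  imports "HOL-Analysis.Analysis"
begin

definition gfun :: "nat \<Rightarrow> real \<Rightarrow> real \<Rightarrow> real" where
  "gfun N \<alpha> t = 2 + \<alpha> - (real N + \<alpha>) * t ^ (N - 2) + (real N - 2) * t powr (real N + \<alpha>)"

definition hfun :: "nat \<Rightarrow> real \<Rightarrow> real \<Rightarrow> real" where
  "hfun N \<alpha> t = \<alpha> - (real N + \<alpha>) * t ^ N + real N * t powr (real N + \<alpha>)"

definition V3 :: "real \<Rightarrow> ('a::euclidean_space \<Rightarrow> real) \<Rightarrow> ('a \<Rightarrow> 'a) \<Rightarrow> real \<Rightarrow> bool" where
  "V3 \<alpha> V GV \<theta> \<longleftrightarrow>
     (\<forall>x. (V has_derivative (\<lambda>h. GV x \<bullet> h)) (at x)) \<and> continuous_on UNIV GV \<and>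
     0 \<le> \<theta> \<and> \<theta> < 1 \<and>
     (\<forall>x. x \<noteq> 0 \<longrightarrow> antimono_on {0<..}
        (\<lambda>t. (real DIM('a) * V (t *\<^sub>R x) + GV (t *\<^sub>R x) \<bullet> (t *\<^sub>R x)) / t powr \<alpha>
             + (real DIM('a) - 2) ^ 3 * \<theta> / (4 * t powr (\<alpha> + 2) * norm x ^ 2)))"

end

theory Submission
  imports Defs
begin


lemma min_at_one:
  fixes f f' :: "real \<Rightarrow> real"
  assumes cont: "continuous_on {0..} f"
    and der: "\<And>z. 0 < z \<Longrightarrow> (f has_real_derivative f' z) (at z)"
    and neg: "\<And>z. 0 < z \<Longrightarrow> z < 1 \<Longrightarrow> f' z \<le> 0"
    and pos: "\<And>z. 1 < z \<Longrightarrow> f' z \<ge> 0"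
    and t: "0 \<le> t"
  shows "f t \<ge> f 1"
proof (cases t "1::real" rule: linorder_cases)
  case less
  have "\<exists>l z. t < z \<and> z < 1 \<and> DERIV f z :> l \<and> f 1 - f t = (1 - t) * l"
  proof (rule MVT[OF less])
    show "continuous_on {t..1} f" by (rule continuous_on_subset[OF cont]) (use t in auto)
  next
    fix y :: real assume y: "t < y" "y < 1"
    then have "0 < y" using t by linarith
    then show "f differentiable (at y)" using der[of y] unfolding real_differentiable_def by blast
  qed
  then obtain l z where z: "t < z" "z < 1" "DERIV f z :> l" "f 1 - f t = (1 - t) * l" by blast
  have "l = f' z" using DERIV_unique[OF z(3) der] z t by simp
  then have "l \<le> 0" using neg z t by simp
  then have "(1 - t) * l \<le> 0" using less by (intro mult_nonneg_nonpos) auto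
  then show ?thesis using z by linarith
next
  case greater
  have "\<exists>l z. 1 < z \<and> z < t \<and> DERIV f z :> l \<and> f t - f 1 = (t - 1) * l"
  proof (rule MVT[OF greater])
    show "continuous_on {1..t} f" by (rule continuous_on_subset[OF cont]) (use t in auto)
  next
    fix y :: real assume y: "1 < y" "y < t"
    then have "0 < y" using t by linarith
    then show "f differentiable (at y)" using der[of y] unfolding real_differentiable_def by blast
  qed
  then obtain l z where z: "1 < z" "z < t" "DERIV f z :> l" "f t - f 1 = (t - 1) * l" by blast
  have "l = f' z" using DERIV_unique[OF z(3) der] z t by simp
  then have "l \<ge> 0" using pos z t by simp
  then have "(t - 1) * l \<ge> 0" using greater by (intro mult_nonneg_nonneg) auto
  then show ?thesis using z by linarith
qed simp

lemma min_at_one_strict: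
  fixes f f' :: "real \<Rightarrow> real"
  assumes cont: "continuous_on {0..} f"
    and der: "\<And>z. 0 < z \<Longrightarrow> (f has_real_derivative f' z) (at z)"
    and neg: "\<And>z. 0 < z \<Longrightarrow> z < 1 \<Longrightarrow> f' z < 0"
    and pos: "\<And>z. 1 < z \<Longrightarrow> f' z > 0"
    and t: "0 \<le> t" "t \<noteq> 1"
  shows "f t > f 1"
proof (cases t "1::real" rule: linorder_cases)
  case less
  have "\<exists>l z. t < z \<and> z < 1 \<and> DERIV f z :> l \<and> f 1 - f t = (1 - t) * l"
  proof (rule MVT[OF less])
    show "continuous_on {t..1} f" by (rule continuous_on_subset[OF cont]) (use t in auto)
  next
    fix y :: real assume y: "t < y" "y < 1"
    then have "0 < y" using t by linarith
    then show "f differentiable (at y)" using der[of y] unfolding real_differentiable_def by blast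
  qed
  then obtain l z where z: "t < z" "z < 1" "DERIV f z :> l" "f 1 - f t = (1 - t) * l" by blast
  have "l = f' z" using DERIV_unique[OF z(3) der] z t by simp
  then have "l < 0" using neg z t by simp
  then have "(1 - t) * l < 0" using less by (intro mult_pos_neg) auto
  then show ?thesis using z by linarith
next
  case greater
  have "\<exists>l z. 1 < z \<and> z < t \<and> DERIV f z :> l \<and> f t - f 1 = (t - 1) * l"
  proof (rule MVT[OF greater])
    show "continuous_on {1..t} f" by (rule continuous_on_subset[OF cont]) (use t in auto)
  next
    fix y :: real assume y: "1 < y" "y < t"
    then have "0 < y" using t by linarith
    then show "f differentiable (at y)" using der[of y] unfolding real_differentiable_def by blast
  qed
  then obtain l z where z: "1 < z" "z < t" "DERIV f z :> l" "f t - f 1 = (t - 1) * l" by blast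
  have "l = f' z" using DERIV_unique[OF z(3) der] z t by simp
  then have "l > 0" using pos z t by simp
  then have "(t - 1) * l > 0" using greater by (intro mult_pos_pos) auto
  then show ?thesis using z by linarith
qed (use t in simp)

lemma powr_cont: "0 < (e::real) \<Longrightarrow> continuous_on {0..} (\<lambda>t::real. t powr e)"
  by (rule continuous_on_powr') (auto intro: continuous_intros)


lemma powr_split: "0 < (z::real) \<Longrightarrow> z powr (real n + b) = z ^ n * z powr b"
  by (simp add: powr_add powr_realpow)

lemma g_props:
  fixes a :: real assumes a: "0 < a" and t: "0 \<le> t" "t \<noteq> 1"
  shows "gfun (n+3) a t > gfun (n+3) a 1"
proof (rule min_at_one_strict[where f' = "\<lambda>z. (real n + 3 + a) * (real n + 1) * z ^ n * (z powr (a + 2) - 1)"])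
  show "continuous_on {0..} (gfun (n + 3) a)"
    unfolding gfun_def using a
    by (intro continuous_intros powr_cont[THEN continuous_on_compose2[of _ _ _ id], simplified]) auto
next
  fix z :: real assume z: "0 < z"
  have e: "z powr (real n + 3 + a - 1) = z ^ n * z powr (a + 2)"
    using powr_split[OF z, of n "a+2"] by (simp add: algebra_simps)
  have e2: "z powr (a + (real n + 2)) = z ^ n * z powr (a + 2)"
    using powr_split[OF z, of n "a+2"] by (simp add: algebra_simps)
  have e3: "\<And>c. z * (c * z ^ (n - Suc 0)) = (if n = 0 then z * c else c * z ^ n)"
    by (cases n) auto
  show "(gfun (n + 3) a has_real_derivative (real n + 3 + a) * (real n + 1) * z ^ n * (z powr (a + 2) - 1)) (at z)"
    unfolding gfun_def using z
    apply (auto intro!: derivative_eq_intros simp: e e2 algebra_simps)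
    by (cases n) (auto simp: algebra_simps)
next
  fix z :: real assume "0 < z" "z < 1"
  then show "(real n + 3 + a) * (real n + 1) * z ^ n * (z powr (a + 2) - 1) < 0"
    using a by (simp add: mult_pos_neg powr01_less_one)
next
  fix z :: real assume "1 < z"
  then show "(real n + 3 + a) * (real n + 1) * z ^ n * (z powr (a + 2) - 1) > 0"
    using a gr_one_powr[of z "a+2"] by simp
qed (use t in auto)


lemma g_props_cont: "0 < a \<Longrightarrow> continuous_on {0..} (gfun (n + 3) a)"
    unfolding gfun_def
    by (intro continuous_intros powr_cont[THEN continuous_on_compose2[of _ _ _ id], simplified]) auto

lemma g_deriv:
  fixes a z :: real assumes z: "0 < z"
  shows "(gfun (n + 3) a has_real_derivative (real n + 3 + a) * (real n + 1) * z ^ n * (z powr (a + 2) - 1)) (at z)"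
proof -
  have e: "z powr (real n + 3 + a - 1) = z ^ n * z powr (a + 2)"
    using powr_split[OF z, of n "a+2"] by (simp add: algebra_simps)
  have e2: "z powr (a + (real n + 2)) = z ^ n * z powr (a + 2)"
    using powr_split[OF z, of n "a+2"] by (simp add: algebra_simps)
  show ?thesis
    unfolding gfun_def using z
    apply (auto intro!: derivative_eq_intros simp: e e2 algebra_simps)
    by (cases n) (auto simp: algebra_simps)
qed

lemma h_props:
  fixes a :: real assumes a: "0 < a" and t: "0 \<le> t" "t \<noteq> 1"
  shows "hfun (n+3) a t > hfun (n+3) a 1"
proof (rule min_at_one_strict[where f' = "\<lambda>z. (real n + 3 + a) * (real n + 3) * z ^ (n+2) * (z powr a - 1)"])
  show "continuous_on {0..} (hfun (n + 3) a)"
    unfolding hfun_def using a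
    by (intro continuous_intros powr_cont[THEN continuous_on_compose2[of _ _ _ id], simplified]) auto
next
  fix z :: real assume z: "0 < z"
  have e: "z powr (real n + 3 + a - 1) = z ^ (n+2) * z powr a"
    using powr_split[OF z, of "n+2" "a"] by (simp add: algebra_simps)
  have e2: "z powr (a + (real n + 2)) = z ^ (n+2) * z powr a"
    using powr_split[OF z, of "n+2" "a"] by (simp add: algebra_simps)
  show "(hfun (n + 3) a has_real_derivative (real n + 3 + a) * (real n + 3) * z ^ (n+2) * (z powr a - 1)) (at z)"
    unfolding hfun_def using z
    by (auto intro!: derivative_eq_intros simp: e e2 algebra_simps)
next
  fix z :: real assume "0 < z" "z < 1"
  then show "(real n + 3 + a) * (real n + 3) * z ^ (n+2) * (z powr a - 1) < 0"
    using a by (simp add: mult_pos_neg powr01_less_one)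
next
  fix z :: real assume "1 < z"
  then show "(real n + 3 + a) * (real n + 3) * z ^ (n+2) * (z powr a - 1) > 0"
    using a gr_one_powr[of z "a"] by simp
qed (use t in auto)

lemma V_deriv:
  fixes V :: "'a::euclidean_space \<Rightarrow> real"
  assumes "\<forall>x. (V has_derivative (\<lambda>h. GV x \<bullet> h)) (at x)"
  shows "((\<lambda>t. V (t *\<^sub>R x)) has_real_derivative GV (t *\<^sub>R x) \<bullet> x) (at t)"
proof -
  have d: "((\<lambda>t. t *\<^sub>R x) has_derivative (\<lambda>h. h *\<^sub>R x)) (at t)"
    by (intro derivative_eq_intros) auto
  have "((\<lambda>t. V (t *\<^sub>R x)) has_derivative (\<lambda>h. GV (t *\<^sub>R x) \<bullet> (h *\<^sub>R x))) (at t)"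
    using has_derivative_compose[OF d, of V] assms by blast
  then show ?thesis
    unfolding has_field_derivative_def by (simp add: mult.commute[of _ "GV (t *\<^sub>R x) \<bullet> x"] fun_eq_iff)
qed



lemma alg:
  fixes N a Q z Vx Wz GW G K n1 :: real
  assumes Q: "Q > 0" and z: "z > 0"
  shows "N*((N+a)*(z^(n+2)*Q))*Vx - (N+a)*(N*z^(n+2)*Wz + z^(n+3)*GW) + (N+a)*(z^(n+2)*Q)*G
     + K*((N+a)*n1*z^n*(Q*z^2-1))
   = (N+a)*z^(n+2)*Q*((N*Vx + G + n1*K) - ((N*Wz + z*GW)/Q + n1*K/(Q*z^2)))"
proof -
  have "(N+a)*z^(n+2)*Q*((N*Wz + z*GW)/Q) = (N+a)*z^(n+2)*(N*Wz + z*GW)" using Q by simp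
  moreover have "(N+a)*z^(n+2)*Q*(n1*K/(Q*z^2)) = (N+a)*z^n*n1*K" using Q z by (simp add: power_add power2_eq_square)
  ultimately show ?thesis by (simp add: algebra_simps power_add power2_eq_square power3_eq_cube)
qed

lemma main_ineq:
  fixes a \<theta> :: real and V :: "'a::euclidean_space \<Rightarrow> real" and GV :: "'a \<Rightarrow> 'a"
  assumes n: "DIM('a) = n + 3" and a: "0 < a"
    and V3: "V3 a V GV \<theta>" and x: "x \<noteq> 0" and t: "0 \<le> t"
  shows "(a + real (n+3) * t powr (real (n+3) + a)) * V x
            - (real (n+3) + a) * t ^ (n+3) * V (t *\<^sub>R x)
            + (t powr (real (n+3) + a) - 1) * (GV x \<bullet> x)
            + (real (n+3) - 2) ^ 2 * \<theta> * gfun (n+3) a t / (4 * norm x ^ 2) \<ge> 0"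
proof -
  have dV: "\<forall>x. (V has_derivative (\<lambda>h. GV x \<bullet> h)) (at x)" and cGV: "continuous_on UNIV GV"
    and mono: "antimono_on {0<..}
        (\<lambda>t. (real DIM('a) * V (t *\<^sub>R x) + GV (t *\<^sub>R x) \<bullet> (t *\<^sub>R x)) / t powr a
             + (real DIM('a) - 2) ^ 3 * \<theta> / (4 * t powr (a + 2) * norm x ^ 2))"
    using V3 x unfolding V3_def by auto
  define F where "F = (\<lambda>t. (real (n+3) * V (t *\<^sub>R x) + GV (t *\<^sub>R x) \<bullet> (t *\<^sub>R x)) / t powr a
             + (real (n+3) - 2) ^ 2 * (real n + 1) * \<theta> / (4 * t powr (a + 2) * norm x ^ 2))"
  have mono': "antimono_on {0<..} F"
    using mono unfolding F_def n by (simp add: power3_eq_cube power2_eq_square algebra_simps)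
  define K where "K = (real (n+3) - 2) ^ 2 * \<theta> / (4 * norm x ^ 2)"
  define \<Phi> where "\<Phi> = (\<lambda>t. (a + real (n+3) * t powr (real (n+3) + a)) * V x
            - (real (n+3) + a) * t ^ (n+3) * V (t *\<^sub>R x)
            + (t powr (real (n+3) + a) - 1) * (GV x \<bullet> x)
            + K * gfun (n+3) a t)"
  have contV: "continuous_on UNIV V"
  proof (rule continuous_at_imp_continuous_on, rule ballI)
    fix y :: 'a
    show "isCont V y" using has_derivative_continuous[OF spec[OF dV, of y]] .
  qed
  define p where "p = (\<lambda>t::real. t powr (real (n+3) + a))"
  define W where "W = (\<lambda>t::real. V (t *\<^sub>R x))"
  define gg where "gg = gfun (n+3) a"
  have \<Phi>eq: "\<Phi> = (\<lambda>t. (a + real (n+3) * p t) * V x - (real (n+3) + a) * t ^ (n+3) * W t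
            + (p t - 1) * (GV x \<bullet> x) + K * gg t)"
    unfolding \<Phi>_def p_def W_def gg_def by simp
  have c1: "continuous_on {0..} p" unfolding p_def using a by (intro powr_cont) auto
  have c2: "continuous_on {0..} W" unfolding W_def
    by (rule continuous_on_compose2[OF contV]) (auto intro: continuous_intros)
  have c3: "continuous_on {0..} gg" unfolding gg_def using a by (rule g_props_cont)
  have "\<Phi> 1 \<le> \<Phi> t"
  proof (rule min_at_one[where f' = "\<lambda>z. (real n + 3 + a) * z ^ (n+2) * z powr a * (F 1 - F z)"])
    show "continuous_on {0..} \<Phi>"
      unfolding \<Phi>eq by (intro continuous_intros c1 c2 c3)
  next
    fix z :: real assume z: "0 < z"
    define Q where "Q = z powr a"
    have Q: "Q > 0" unfolding Q_def using z by simp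
    have e: "z powr (real (n+3) + a - 1) = z ^ (n+2) * Q"
      using powr_split[OF z, of "n+2" "a"] unfolding Q_def by (simp add: algebra_simps)
    have e2: "z powr (a + 2) = Q * z ^ 2"
      using powr_split[OF z, of "2" "a"] unfolding Q_def by (simp add: algebra_simps)
    have dp: "(p has_real_derivative (real (n+3) + a) * (z ^ (n+2) * Q)) (at z)"
      unfolding p_def using has_real_derivative_powr[OF z, of "real (n+3) + a"] e by simp
    have dW: "(W has_real_derivative GV (z *\<^sub>R x) \<bullet> x) (at z)"
      unfolding W_def by (rule V_deriv[OF dV])
    have dg: "(gg has_real_derivative (real n + 3 + a) * (real n + 1) * z ^ n * (Q * z ^ 2 - 1)) (at z)"
      unfolding gg_def using g_deriv[OF z, of n a] e2 by simp
    have D: "(\<Phi> has_real_derivative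
        real (n+3) * ((real (n+3) + a) * (z ^ (n+2) * Q)) * V x
        - (real (n+3) + a) * (real (n+3) * z ^ (n+2) * W z + z ^ (n+3) * (GV (z *\<^sub>R x) \<bullet> x))
        + (real (n+3) + a) * (z ^ (n+2) * Q) * (GV x \<bullet> x)
        + K * ((real n + 3 + a) * (real n + 1) * z ^ n * (Q * z ^ 2 - 1))) (at z)"
      unfolding \<Phi>eq
      apply (rule derivative_eq_intros dp dW dg refl | simp)+
      by (simp add: algebra_simps)
    have xn: "norm x > 0" using x by simp
    have e3: "z powr (a + 2) = z powr a * z ^ 2"
      using powr_split[OF z, of "2" "a"] by (simp add: algebra_simps)
    have F1: "F 1 = real (n+3) * V x + GV x \<bullet> x + (real n + 1) * K"
      unfolding F_def K_def by (simp add: field_simps)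
    have Fz: "F z = (real (n+3) * W z + z * (GV (z *\<^sub>R x) \<bullet> x)) / Q + (real n + 1) * K / (Q * z ^ 2)"
      unfolding F_def K_def W_def Q_def e3 by (simp add: field_simps)
    have "real (n+3) * ((real (n+3) + a) * (z ^ (n+2) * Q)) * V x
        - (real (n+3) + a) * (real (n+3) * z ^ (n+2) * W z + z ^ (n+3) * (GV (z *\<^sub>R x) \<bullet> x))
        + (real (n+3) + a) * (z ^ (n+2) * Q) * (GV x \<bullet> x)
        + K * ((real (n+3) + a) * (real n + 1) * z ^ n * (Q * z ^ 2 - 1))
      = (real (n+3) + a) * z ^ (n+2) * Q * (F 1 - F z)"
      unfolding F1 Fz by (rule alg[OF Q z])
    then have "real (n+3) * ((real (n+3) + a) * (z ^ (n+2) * Q)) * V x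
        - (real (n+3) + a) * (real (n+3) * z ^ (n+2) * W z + z ^ (n+3) * (GV (z *\<^sub>R x) \<bullet> x))
        + (real (n+3) + a) * (z ^ (n+2) * Q) * (GV x \<bullet> x)
        + K * ((real n + 3 + a) * (real n + 1) * z ^ n * (Q * z ^ 2 - 1))
      = (real n + 3 + a) * z ^ (n+2) * z powr a * (F 1 - F z)"
      unfolding Q_def by (simp add: add.assoc)
    with D show "(\<Phi> has_real_derivative (real n + 3 + a) * z ^ (n+2) * z powr a * (F 1 - F z)) (at z)"
      by simp
  next
    fix z :: real assume z: "0 < z" "z < 1"
    then have "F 1 \<le> F z" using monotone_onD[OF mono', of z 1] by auto
    then show "(real n + 3 + a) * z ^ (n+2) * z powr a * (F 1 - F z) \<le> 0"
      using z a by (simp add: mult_nonneg_nonpos)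
  next
    fix z :: real assume z: "1 < z"
    then have "F z \<le> F 1" using monotone_onD[OF mono', of 1 z] by auto
    then show "(real n + 3 + a) * z ^ (n+2) * z powr a * (F 1 - F z) \<ge> 0"
      using z a by simp
  qed (use t in auto)
  moreover have "\<Phi> 1 = 0" unfolding \<Phi>_def gfun_def by simp
  ultimately show ?thesis unfolding \<Phi>_def K_def by simp
qed



lemma aux_neg: "0 \<le> (A::real) + B \<Longrightarrow> - B \<le> A" by linarith

theorem lemma2p1:
  fixes \<alpha> \<theta> :: real and V :: "'a::euclidean_space \<Rightarrow> real" and GV :: "'a \<Rightarrow> 'a"
  assumes N3: "DIM('a) \<ge> 3"
    and alpha: "0 < \<alpha>" "\<alpha> < real DIM('a)"
  shows "gfun DIM('a) \<alpha> 1 = 0 \<and> hfun DIM('a) \<alpha> 1 = 0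
     \<and> (\<forall>t. 0 \<le> t \<and> t \<noteq> 1 \<longrightarrow> gfun DIM('a) \<alpha> t > gfun DIM('a) \<alpha> 1)
     \<and> (\<forall>t. 0 \<le> t \<and> t \<noteq> 1 \<longrightarrow> hfun DIM('a) \<alpha> t > hfun DIM('a) \<alpha> 1)
     \<and> (V3 \<alpha> V GV \<theta> \<longrightarrow>
         (\<forall>t x. 0 \<le> t \<and> x \<noteq> 0 \<longrightarrow>
            (\<alpha> + real DIM('a) * t powr (real DIM('a) + \<alpha>)) * V x
            - (real DIM('a) + \<alpha>) * t ^ DIM('a) * V (t *\<^sub>R x)
            + (t powr (real DIM('a) + \<alpha>) - 1) * (GV x \<bullet> x)
            \<ge> - ((real DIM('a) - 2) ^ 2 * \<theta> * gfun DIM('a) \<alpha> t / (4 * norm x ^ 2))))"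


proof -
  define n where "n = DIM('a) - 3"
  have n: "DIM('a) = n + 3" using N3 unfolding n_def by simp
  show ?thesis unfolding n
  proof (intro conjI allI impI)
    show "gfun (n + 3) \<alpha> 1 = 0" by (simp add: gfun_def)
    show "hfun (n + 3) \<alpha> 1 = 0" by (simp add: hfun_def)
  next
    fix t :: real assume "0 \<le> t \<and> t \<noteq> 1"
    then show "gfun (n + 3) \<alpha> t > gfun (n + 3) \<alpha> 1" using g_props[of \<alpha> t n] alpha(1) by auto
  next
    fix t :: real assume "0 \<le> t \<and> t \<noteq> 1"
    then show "hfun (n + 3) \<alpha> t > hfun (n + 3) \<alpha> 1" using h_props[of \<alpha> t n] alpha(1) by auto
  next
    fix t :: real and x :: 'a assume V: "V3 \<alpha> V GV \<theta>" and tx: "0 \<le> t \<and> x \<noteq> 0"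
    show "(\<alpha> + real (n + 3) * t powr (real (n + 3) + \<alpha>)) * V x
            - (real (n + 3) + \<alpha>) * t ^ (n + 3) * V (t *\<^sub>R x)
            + (t powr (real (n + 3) + \<alpha>) - 1) * (GV x \<bullet> x)
            \<ge> - ((real (n + 3) - 2) ^ 2 * \<theta> * gfun (n + 3) \<alpha> t / (4 * norm x ^ 2))"
      using tx by (intro aux_neg main_ineq[OF n alpha(1) V]) auto
  qed
qed

end
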